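(* Let $U$ be an $N\times N$ unitary matrix with no zero entries, let $S,T$ be $N\times N$ enphased permutation matrices, let $V=SUT^{-1}$, and let $\Pi_S,\Pi_T$ be the permutation matrices with $S=D_S\Pi_S$, $T=D_T\Pi_T$ for unitary diagonal $D_S,D_T$. Then $\mathbf D(U)=\mathbf D(V)$, i.e. the multiplicities of the eigenvalue $1$ in the spectra of $\mathcal I_U$ and $\mathcal I_V$ are equal. Moreover $\mathbb V_V(1)=\Phi_{\Pi_S,\Pi_T}(\mathbb V_U(1))$, $\mathrm{Im}\,\mathbb V_V(1)=\Phi_{\Pi_S,\Pi_T}(\mathrm{Im}\,\mathbb V_U(1))$, and $\mathcal F_V=\Phi_{S,T}(\mathcal F_U)$.
   Context: An enphased permutation matrix is a product of a permutation matrix and a unitary diagonal matrix (factorization $D\Pi$ is unique). $\circ$ is the entrywise product. For unitary $W$ with no zero entries: $\mathcal C_W(F)=(F\circ W)W^*$, $\mathcal D_W(F)=W(\overline F\circ W)^*$, $\mathcal I_W=\mathcal C_W^{-1}\mathcal D_W$ (operators on $\mathbb C^{N\times N}$); $\mathbb V_W(\lambda)$ is the complex eigenspace of $\mathcal I_W$ for eigenvalue $\lambda$, and $\mathrm{Im}\,\mathbb V_W(\lambda)$ is the real space of purely imaginary matrices in $\mathbb V_W(\lambda)$. The feasible space is $\mathcal F_W=\{iR\circ W:\ R \text{ real } N\times N,\ (iR\circ W)W^* \text{ antihermitian}\}$ (equivalently, the intersection of the tangent spaces at $W$ to the unitary group and to the manifold of matrices whose entries have the same moduli as those of $W$), and the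 undephased defect is $\mathbf D(W)=\dim_{\mathbb R}\mathcal F_W$. $\Phi_{A,B}$ denotes the operator $X\mapsto AXB^{-1}$. *)

theory Defs
  imports "HOL-Analysis.Analysis"
begin

type_synonym 'n cmat = "complex ^ 'n ^ 'n"

definition ctrans :: "'n::finite cmat \<Rightarrow> 'n cmat" where
  "ctrans M = (\<chi> i j. cnj (M $ j $ i))"

definition hprod :: "'n::finite cmat \<Rightarrow> 'n cmat \<Rightarrow> 'n cmat" (infixl "\<circ>\<^sub>H" 70) where
  "hprod A B = (\<chi> i j. A $ i $ j * B $ i $ j)"

definition cscale :: "complex \<Rightarrow> 'n::finite cmat \<Rightarrow> 'n cmat" where
  "cscale c M = (\<chi> i j. c * M $ i $ j)"

definition unitary :: "'n::finite cmat \<Rightarrow> bool" where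
  "unitary U \<longleftrightarrow> U ** ctrans U = mat 1 \<and> ctrans U ** U = mat 1"

definition no_zero_entries :: "'n::finite cmat \<Rightarrow> bool" where
  "no_zero_entries U \<longleftrightarrow> (\<forall>i j. U $ i $ j \<noteq> 0)"

definition unitary_diagonal :: "'n::finite cmat \<Rightarrow> bool" where
  "unitary_diagonal D \<longleftrightarrow> (\<forall>i j. i \<noteq> j \<longrightarrow> D $ i $ j = 0) \<and> (\<forall>i. cmod (D $ i $ i) = 1)"

definition permutation_matrix :: "'n::finite cmat \<Rightarrow> bool" where
  "permutation_matrix P \<longleftrightarrow> (\<exists>p. p permutes (UNIV :: 'n set) \<and>
      P = (\<chi> i j. if i = p j then 1 else 0))"

definition enphased_permutation :: "'n::finite cmat \<Rightarrow> bool" where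
  "enphased_permutation S \<longleftrightarrow> (\<exists>D P. unitary_diagonal D \<and> permutation_matrix P \<and> S = D ** P)"

definition opC :: "'n::finite cmat \<Rightarrow> 'n cmat \<Rightarrow> 'n cmat" where
  "opC W F = (F \<circ>\<^sub>H W) ** ctrans W"

definition opD :: "'n::finite cmat \<Rightarrow> 'n cmat \<Rightarrow> 'n cmat" where
  "opD W F = W ** ctrans ((\<chi> i j. cnj (F $ i $ j)) \<circ>\<^sub>H W)"

definition opI :: "'n::finite cmat \<Rightarrow> 'n cmat \<Rightarrow> 'n cmat" where
  "opI W = inv (opC W) \<circ> opD W"

definition eigsp :: "'n::finite cmat \<Rightarrow> complex \<Rightarrow> 'n cmat set" where
  "eigsp W lam = {F. opI W F = cscale lam F}"

definition Im_eigsp :: "'n::finite cmat \<Rightarrow> complex \<Rightarrow> 'n cmat set" where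
  "Im_eigsp W lam = {F \<in> eigsp W lam. \<forall>i j. Re (F $ i $ j) = 0}"

definition feasible :: "'n::finite cmat \<Rightarrow> 'n cmat set" where
  "feasible W = {F. \<exists>R :: real ^ 'n ^ 'n.
      F = (\<chi> i j. \<i> * complex_of_real (R $ i $ j)) \<circ>\<^sub>H W \<and>
      ctrans (F ** ctrans W) = - (F ** ctrans W)}"

text \<open>undephased defect: real dimension of the feasible space\<close>
definition defect :: "'n::finite cmat \<Rightarrow> nat" where
  "defect W = dim (feasible W)"

definition Phi :: "'n::finite cmat \<Rightarrow> 'n cmat \<Rightarrow> 'n cmat \<Rightarrow> 'n cmat" where
  "Phi A B X = A ** X ** matrix_inv B"

end

theory Submission
  imports Defs
begin


definition tau :: "('n::finite \<Rightarrow> complex) \<Rightarrow> ('n \<Rightarrow> complex) \<Rightarrow> ('n \<Rightarrow> 'n) \<Rightarrow> ('n \<Rightarrow> 'n) \<Rightarrow> 'n cmat \<Rightarrow> 'n cmat"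
  where "tau a b s r X = (\<chi> i j. a i * X $ s i $ r j * b j)"

lemma tau_nth[simp]: "tau a b s r X $ i $ j = a i * X $ s i $ r j * b j"
  by (simp add: tau_def)

lemma sum_bij_reindex: "bij r \<Longrightarrow> (\<Sum>k\<in>UNIV. f (r k)) = (\<Sum>k\<in>UNIV. f k)"
  using sum.reindex_bij_betw[of r UNIV UNIV f] by simp

lemma tau_mult:
  assumes "bij r" "\<And>k. b k * c k = 1"
  shows "tau a b s r X ** tau c d r t Y = tau a d s t (X ** Y)"
proof -
  have "(\<Sum>k\<in>UNIV. a i * X $ s i $ r k * b k * (c k * Y $ r k $ t j * d j))
      = a i * (\<Sum>k\<in>UNIV. X $ s i $ r k * Y $ r k $ t j) * d j" for i j
  proof -
    have "(\<Sum>k\<in>UNIV. a i * X $ s i $ r k * b k * (c k * Y $ r k $ t j * d j))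
       = (\<Sum>k\<in>UNIV. a i * (X $ s i $ r k * Y $ r k $ t j) * d j * (b k * c k))"
      by (intro sum.cong) (auto simp: algebra_simps)
    also have "\<dots> = (\<Sum>k\<in>UNIV. a i * (X $ s i $ r k * Y $ r k $ t j) * d j)"
      using assms(2) by simp
    finally show ?thesis by (simp add: sum_distrib_left sum_distrib_right)
  qed
  then show ?thesis
    by (simp add: matrix_matrix_mult_def vec_eq_iff sum_bij_reindex[OF assms(1), of "\<lambda>k. _ $ _ $ k * _ $ k $ _"])
qed

lemma tau_ctrans: "ctrans (tau a b s r X) = tau (\<lambda>i. cnj (b i)) (\<lambda>i. cnj (a i)) r s (ctrans X)"
  by (simp add: ctrans_def vec_eq_iff mult.commute mult.left_commute)

lemma tau_hprod: "hprod (tau a b s r X) (tau c d s r Y) = tau (\<lambda>i. a i * c i) (\<lambda>i. b i * d i) s r (hprod X Y)"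
  by (simp add: hprod_def vec_eq_iff mult.commute mult.left_commute)

lemma tau_cnj: "(\<chi> i j. cnj (tau a b s r X $ i $ j)) = tau (\<lambda>i. cnj (a i)) (\<lambda>i. cnj (b i)) s r (\<chi> i j. cnj (X $ i $ j))"
  by (simp add: vec_eq_iff)

lemma tau_mat1: assumes "inj s" "\<And>i. a i * c i = 1" shows "tau a c s s (mat 1) = mat 1"
  using assms by (auto simp: vec_eq_iff mat_def inj_eq)

lemma tau_neg: "tau a b s r (- X) = - tau a b s r X"
  by (simp add: vec_eq_iff)

lemma tau_tau: "tau a b s r (tau c d s' r' X) = tau (\<lambda>i. a i * c (s i)) (\<lambda>j. d (r j) * b j) (s' \<circ> s) (r' \<circ> r) X"
  by (simp add: vec_eq_iff mult.commute mult.left_commute)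

lemma tau_id: "tau (\<lambda>_. 1) (\<lambda>_. 1) id id X = X"
  by (simp add: vec_eq_iff)

definition good :: "('n::finite \<Rightarrow> complex) \<Rightarrow> ('n \<Rightarrow> complex) \<Rightarrow> ('n \<Rightarrow> 'n) \<Rightarrow> ('n \<Rightarrow> 'n) \<Rightarrow> bool"
  where "good a b s r \<longleftrightarrow> bij s \<and> bij r \<and> (\<forall>i. cmod (a i) = 1) \<and> (\<forall>i. cmod (b i) = 1)"

lemma cmod1_mult_cnj: "cmod z = 1 \<Longrightarrow> z * cnj z = 1"
  by (metis complex_norm_square mult.commute of_real_1 power_one)

lemma cmod1_cnj_mult: "cmod z = 1 \<Longrightarrow> cnj z * z = 1"
  using cmod1_mult_cnj by (simp add: mult.commute)

definition ia where "ia a s = (\<lambda>i. cnj (a (inv s i)))"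

lemma good_inv: "good a b s r \<Longrightarrow> good (ia a s) (ia b r) (inv s) (inv r)"
  by (simp add: good_def ia_def bij_imp_bij_inv)

lemma tau_inv1: assumes "good a b s r" shows "tau (ia a s) (ia b r) (inv s) (inv r) (tau a b s r X) = X"
  using assms unfolding good_def ia_def
  by (simp add: tau_tau vec_eq_iff cmod1_cnj_mult cmod1_mult_cnj bij_is_surj[THEN surj_f_inv_f]
         mult.assoc)

lemma tau_inv2: assumes "good a b s r" shows "tau a b s r (tau (ia a s) (ia b r) (inv s) (inv r) X) = X"
  using assms unfolding good_def ia_def
  by (simp add: tau_tau vec_eq_iff cmod1_cnj_mult cmod1_mult_cnj bij_is_inj[THEN inv_f_f]
         mult.assoc)

lemma ia_one[simp]: "ia (\<lambda>_. 1) s = (\<lambda>_. 1)"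
  by (simp add: ia_def)

lemma good_one: "bij s \<Longrightarrow> bij r \<Longrightarrow> good (\<lambda>_. 1) (\<lambda>_. 1) s r"
  by (simp add: good_def)

lemma img_eq: assumes "\<forall>x\<in>A. f x \<in> B" "\<forall>y\<in>B. g y \<in> A" "\<forall>y\<in>B. f (g y) = y" shows "B = f ` A"
  using assms by force

definition monom :: "'n::finite cmat \<Rightarrow> ('n \<Rightarrow> complex) \<Rightarrow> ('n \<Rightarrow> 'n) \<Rightarrow> bool" where
  "monom M d p \<longleftrightarrow> p permutes UNIV \<and> (\<forall>i. cmod (d i) = 1) \<and> M = (\<chi> i j. if i = p j then d i else 0)"

lemma perm_eq_inv: "p permutes UNIV \<Longrightarrow> (i = p k) = (k = inv p i)"
  by (metis permutes_inverses(1,2))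

lemma monom_left: assumes "monom M d p" shows "M ** X = (\<chi> i j. d i * X $ inv p i $ j)"
proof -
  have "(\<Sum>k\<in>UNIV. (if i = p k then d i else 0) * X $ k $ j) = d i * X $ inv p i $ j" for i j
  proof -
    have "(\<Sum>k\<in>UNIV. (if i = p k then d i else 0) * X $ k $ j) = (\<Sum>k\<in>UNIV. if k = inv p i then d i * X $ k $ j else 0)"
      using assms unfolding monom_def by (intro sum.cong) (auto simp: perm_eq_inv)
    then show ?thesis by simp
  qed
  then show ?thesis using assms unfolding monom_def by (simp add: matrix_matrix_mult_def vec_eq_iff)
qed

lemma monom_right_ct: assumes "monom M d p" shows "X ** ctrans M = (\<chi> i j. X $ i $ inv p j * cnj (d j))"
proof -
  have "(\<Sum>k\<in>UNIV. X $ i $ k * cnj (if j = p k then d j else 0)) = X $ i $ inv p j * cnj (d j)" for i j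
  proof -
    have "(\<Sum>k\<in>UNIV. X $ i $ k * cnj (if j = p k then d j else 0)) = (\<Sum>k\<in>UNIV. if k = inv p j then X $ i $ k * cnj (d j) else 0)"
      using assms unfolding monom_def by (intro sum.cong) (auto simp: perm_eq_inv)
    then show ?thesis by simp
  qed
  then show ?thesis using assms unfolding monom_def by (simp add: matrix_matrix_mult_def vec_eq_iff ctrans_def)
qed

lemma monom_ct_left: assumes "monom M d p" shows "ctrans M ** M = mat 1"
proof -
  have "(\<Sum>k\<in>UNIV. cnj (if k = p i then d k else 0) * (if k = p j then d k else 0)) = (if i = j then 1 else 0)" for i j
  proof -
    have pi: "p permutes UNIV" and dd: "\<And>i. cmod (d i) = 1" using assms unfolding monom_def by auto
    have "(\<Sum>k\<in>UNIV. cnj (if k = p i then d k else 0) * (if k = p j then d k else 0)) = (\<Sum>k\<in>UNIV. if k = p i then (if i = j then 1 else 0) else 0)"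
      using dd permutes_inj[OF pi] by (intro sum.cong) (auto simp: cmod1_cnj_mult inj_eq)
    then show ?thesis by simp
  qed
  then show ?thesis using assms unfolding monom_def by (simp add: matrix_matrix_mult_def vec_eq_iff ctrans_def mat_def)
qed

lemma monom_ct_right: assumes "monom M d p" shows "M ** ctrans M = mat 1"
  using assms unfolding monom_right_ct[OF assms]
  by (auto simp: vec_eq_iff monom_def mat_def cmod1_mult_cnj permutes_inverses)

lemma matrix_inv_eq: fixes A :: "'a::comm_semiring_1^'n::finite^'n" assumes "A ** B = mat 1" "B ** A = mat 1" shows "matrix_inv A = B"
proof -
  have "\<exists>B'. A ** B' = mat 1 \<and> B' ** A = mat 1" using assms by blast
  then have h: "A ** matrix_inv A = mat 1 \<and> matrix_inv A ** A = mat 1"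
    unfolding matrix_inv_def by (rule someI_ex)
  have "matrix_inv A = matrix_inv A ** (A ** B)" by (simp add: assms matrix_mul_rid)
  also have "\<dots> = B" by (simp add: matrix_mul_assoc h matrix_mul_lid)
  finally show ?thesis .
qed

lemma monom_Phi: assumes "monom A d p" "monom B e q"
  shows "Phi A B X = tau d (\<lambda>j. cnj (e j)) (inv p) (inv q) X"
  unfolding Phi_def matrix_inv_eq[OF monom_ct_right[OF assms(2)] monom_ct_left[OF assms(2)]]
    monom_left[OF assms(1)] monom_right_ct[OF assms(2)]
  by (simp add: vec_eq_iff)

lemma monom_good: "monom A d p \<Longrightarrow> monom B e q \<Longrightarrow> good d (\<lambda>j. cnj (e j)) (inv p) (inv q)"
  unfolding monom_def good_def by (auto intro: bij_imp_bij_inv permutes_bij)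

lemma diag_perm_monom: assumes "unitary_diagonal D" "permutation_matrix P" "S = D ** P"
  shows "\<exists>p. monom S (\<lambda>i. D $ i $ i) p \<and> monom P (\<lambda>_. 1) p"
proof -
  obtain p where p: "p permutes UNIV" "P = (\<chi> i j. if i = p j then 1 else 0)"
    using assms(2) unfolding permutation_matrix_def by blast
  have D: "D $ i $ k = (if k = i then D $ i $ i else 0)" for i k using assms(1) unfolding unitary_diagonal_def by auto
  have "(\<Sum>k\<in>UNIV. D $ i $ k * P $ k $ j) = (if i = p j then D $ i $ i else 0)" for i j
  proof -
    have "(\<Sum>k\<in>UNIV. D $ i $ k * P $ k $ j) = (\<Sum>k\<in>UNIV. if k = i then D $ i $ i * P $ i $ j else 0)"
      by (intro sum.cong refl) (subst D, simp)
    then show ?thesis by (simp add: p(2))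
  qed
  then have "S = (\<chi> i j. if i = p j then D $ i $ i else 0)"
    using assms(3) by (simp add: matrix_matrix_mult_def vec_eq_iff)
  then show ?thesis using p assms(1) unfolding monom_def unitary_diagonal_def by auto
qed


lemma good_cnj1: "good a b s r \<Longrightarrow> cnj (a k) * a k = 1" "good a b s r \<Longrightarrow> a k * cnj (a k) = 1"
  "good a b s r \<Longrightarrow> cnj (b k) * b k = 1" "good a b s r \<Longrightarrow> b k * cnj (b k) = 1"
  by (auto simp: good_def cmod1_cnj_mult cmod1_mult_cnj)

lemma unitary_tau: assumes "good a b s r" "unitary W" shows "unitary (tau a b s r W)"
proof -
  have bs: "bij s" "bij r" using assms(1) by (auto simp: good_def)
  have "tau a b s r W ** ctrans (tau a b s r W) = tau a (\<lambda>i. cnj (a i)) s s (W ** ctrans W)"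
    unfolding tau_ctrans by (rule tau_mult[OF bs(2) good_cnj1(4)[OF assms(1)]])
  also have "\<dots> = mat 1" using assms(2) unfolding unitary_def
    by (simp add: tau_mat1 bij_is_inj[OF bs(1)] good_cnj1[OF assms(1)])
  finally have 1: "tau a b s r W ** ctrans (tau a b s r W) = mat 1" .
  have "ctrans (tau a b s r W) ** tau a b s r W = tau (\<lambda>i. cnj (b i)) b r r (ctrans W ** W)"
    unfolding tau_ctrans by (rule tau_mult[OF bs(1) good_cnj1(1)[OF assms(1)]])
  also have "\<dots> = mat 1" using assms(2) unfolding unitary_def
    by (simp add: tau_mat1 bij_is_inj[OF bs(2)] good_cnj1[OF assms(1)])
  finally show ?thesis using 1 unfolding unitary_def by simp
qed

lemma nz_tau: assumes "good a b s r" "no_zero_entries W" shows "no_zero_entries (tau a b s r W)"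
proof -
  have "a i \<noteq> 0" "b j \<noteq> 0" for i j using assms(1) unfolding good_def by (metis norm_zero zero_neq_one)+
  then show ?thesis using assms(2) unfolding no_zero_entries_def by simp
qed

definition opCinv :: "'n::finite cmat \<Rightarrow> 'n cmat \<Rightarrow> 'n cmat" where
  "opCinv W G = hprod (G ** W) (\<chi> i j. inverse (W $ i $ j))"

lemma bij_opC: assumes "unitary W" "no_zero_entries W" shows "bij (opC W)"
proof (rule o_bij)
  have nz: "\<And>i j. W $ i $ j \<noteq> 0" using assms(2) by (simp add: no_zero_entries_def)
  show "opCinv W \<circ> opC W = id"
  proof
    fix F
    have "opC W F ** W = hprod F W" using assms(1)
      by (simp add: opC_def unitary_def matrix_mul_assoc[symmetric] matrix_mul_rid)
    then show "(opCinv W \<circ> opC W) F = id F"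
      by (simp add: opCinv_def hprod_def vec_eq_iff nz)
  qed
  show "opC W \<circ> opCinv W = id"
  proof
    fix G
    have "hprod (opCinv W G) W = G ** W"
      by (simp add: opCinv_def hprod_def vec_eq_iff nz)
    then show "(opC W \<circ> opCinv W) G = id G" using assms(1)
      by (simp add: opC_def unitary_def matrix_mul_assoc[symmetric] matrix_mul_rid)
  qed
qed

lemma eig1_iff: assumes "unitary W" "no_zero_entries W"
  shows "F \<in> eigsp W 1 \<longleftrightarrow> opD W F = opC W F"
proof -
  have c: "cscale 1 F = F" by (simp add: cscale_def)
  have "F \<in> eigsp W 1 \<longleftrightarrow> inv (opC W) (opD W F) = F" by (simp add: eigsp_def opI_def c)
  also have "\<dots> \<longleftrightarrow> opD W F = opC W F" by (metis bij_inv_eq_iff[OF bij_opC[OF assms]])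
  finally show ?thesis .
qed

lemma tau_hprod1: "tau a b s r (hprod X W) = hprod (tau (\<lambda>_. 1) (\<lambda>_. 1) s r X) (tau a b s r W)"
  by (simp add: hprod_def vec_eq_iff mult.commute mult.left_commute)

lemma opC_tau: assumes "good a b s r"
  shows "opC (tau a b s r W) (tau (\<lambda>_. 1) (\<lambda>_. 1) s r F) = tau a (\<lambda>i. cnj (a i)) s s (opC W F)"
proof -
  have "bij r" using assms by (simp add: good_def)
  then show ?thesis unfolding opC_def tau_hprod1[symmetric] tau_ctrans
    by (rule tau_mult) (rule good_cnj1(4)[OF assms])
qed

lemma opD_tau: assumes "good a b s r"
  shows "opD (tau a b s r W) (tau (\<lambda>_. 1) (\<lambda>_. 1) s r F) = tau a (\<lambda>i. cnj (a i)) s s (opD W F)"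
proof -
  have "bij r" using assms by (simp add: good_def)
  have e: "(\<chi> i j. cnj (tau (\<lambda>_. 1) (\<lambda>_. 1) s r F $ i $ j)) = tau (\<lambda>_. 1) (\<lambda>_. 1) s r (\<chi> i j. cnj (F $ i $ j))"
    by (simp add: vec_eq_iff)
  show ?thesis unfolding opD_def e tau_hprod1[symmetric] tau_ctrans
    by (rule tau_mult[OF \<open>bij r\<close>]) (rule good_cnj1(4)[OF assms])
qed

lemma tau_inj: assumes "good a b s r" shows "inj (tau a b s r)"
  by (rule injI) (metis assms tau_inv1)

lemma good_aa: "good a b s r \<Longrightarrow> good a (\<lambda>i. cnj (a i)) s s"
  by (simp add: good_def)

lemma eigsp_tau: assumes "good a b s r" "unitary W" "no_zero_entries W" "F \<in> eigsp W 1"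
  shows "tau (\<lambda>_. 1) (\<lambda>_. 1) s r F \<in> eigsp (tau a b s r W) 1"
proof -
  have "opD W F = opC W F" using assms(4) eig1_iff[OF assms(2,3)] by simp
  then have "opD (tau a b s r W) (tau (\<lambda>_. 1) (\<lambda>_. 1) s r F) = opC (tau a b s r W) (tau (\<lambda>_. 1) (\<lambda>_. 1) s r F)"
    unfolding opC_tau[OF assms(1)] opD_tau[OF assms(1)] by simp
  then show ?thesis using eig1_iff[OF unitary_tau[OF assms(1,2)] nz_tau[OF assms(1,3)]] by simp
qed

lemma Im_eigsp_tau: assumes "good a b s r" "unitary W" "no_zero_entries W" "F \<in> Im_eigsp W 1"
  shows "tau (\<lambda>_. 1) (\<lambda>_. 1) s r F \<in> Im_eigsp (tau a b s r W) 1"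
proof -
  have "F \<in> eigsp W 1" "\<And>i j. Re (F $ i $ j) = 0" using assms(4) unfolding Im_eigsp_def by auto
  then show ?thesis using eigsp_tau[OF assms(1-3)] unfolding Im_eigsp_def by simp
qed

lemma feasible_tau: fixes W F :: "'n::finite cmat" assumes "good a b s r" "F \<in> feasible W"
  shows "tau a b s r F \<in> feasible (tau a b s r W)"
proof -
  obtain R :: "real^'n^'n" where R: "F = hprod (\<chi> i j. \<i> * complex_of_real (R $ i $ j)) W"
     "ctrans (F ** ctrans W) = - (F ** ctrans W)"
    using assms(2) unfolding feasible_def by blast
  have br: "bij r" using assms by (simp add: good_def)
  define R' :: "real^'n^'n" where "R' = (\<chi> i j. R $ s i $ r j)"
  have 1: "tau a b s r F = hprod (\<chi> i j. \<i> * complex_of_real (R' $ i $ j)) (tau a b s r W)"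
    unfolding R(1) tau_hprod1 by (simp add: R'_def vec_eq_iff hprod_def)
  have m: "tau a b s r F ** ctrans (tau a b s r W) = tau a (\<lambda>i. cnj (a i)) s s (F ** ctrans W)"
    unfolding tau_ctrans by (rule tau_mult[OF br good_cnj1(4)[OF assms(1)]])
  have 2: "ctrans (tau a b s r F ** ctrans (tau a b s r W)) = - (tau a b s r F ** ctrans (tau a b s r W))"
    unfolding m by (simp add: tau_ctrans R(2) tau_neg)
  show ?thesis unfolding feasible_def using 1 2 by blast
qed

lemma linear_tau: "linear (tau a b s r)"
proof (rule linearI)
  show "tau a b s r (X + Y) = tau a b s r X + tau a b s r Y" for X Y by (simp add: vec_eq_iff algebra_simps)
  show "tau a b s r (c *\<^sub>R X) = c *\<^sub>R tau a b s r X" for c X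
  proof -
    have h: "a i * (c *\<^sub>R (X $ s i $ r j)) * b j = c *\<^sub>R (a i * X $ s i $ r j * b j)" for i j
      by (simp only: mult_scaleR_left mult_scaleR_right)
    show ?thesis by (simp only: vec_eq_iff tau_nth vector_scaleR_component h simp_thms)
  qed
qed



theorem corollary3p6:
  fixes U S T D_S P_S D_T P_T :: "'n::finite cmat"
  assumes "unitary U" and "no_zero_entries U"
    and "unitary_diagonal D_S" and "permutation_matrix P_S" and "S = D_S ** P_S"
    and "unitary_diagonal D_T" and "permutation_matrix P_T" and "T = D_T ** P_T"
  shows "defect U = defect (S ** U ** matrix_inv T)
    \<and> eigsp (S ** U ** matrix_inv T) 1 = Phi P_S P_T ` eigsp U 1
    \<and> Im_eigsp (S ** U ** matrix_inv T) 1 = Phi P_S P_T ` Im_eigsp U 1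
    \<and> feasible (S ** U ** matrix_inv T) = Phi S T ` feasible U"
proof -
  obtain p where p: "monom S (\<lambda>i. D_S $ i $ i) p" "monom P_S (\<lambda>_. 1) p"
    using diag_perm_monom[OF assms(3,4,5)] by blast
  obtain q where q: "monom T (\<lambda>i. D_T $ i $ i) q" "monom P_T (\<lambda>_. 1) q"
    using diag_perm_monom[OF assms(6,7,8)] by blast
  define a where "a = (\<lambda>i. D_S $ i $ i)"
  define b where "b = (\<lambda>j. cnj (D_T $ j $ j))"
  define s where "s = inv p"
  define r where "r = inv q"
  have g: "good a b s r" unfolding a_def b_def s_def r_def by (rule monom_good[OF p(1) q(1)])
  have g1: "good (\<lambda>_. 1) (\<lambda>_. 1) s r" unfolding s_def r_def using monom_good[OF p(2) q(2)] by simp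
  have V: "S ** U ** matrix_inv T = tau a b s r U"
    using monom_Phi[OF p(1) q(1), of U] unfolding Phi_def a_def b_def s_def r_def .
  have PhiST: "Phi S T = tau a b s r"
    using monom_Phi[OF p(1) q(1)] unfolding a_def b_def s_def r_def by blast
  have PhiP: "Phi P_S P_T = tau (\<lambda>_. 1) (\<lambda>_. 1) s r"
    using monom_Phi[OF p(2) q(2)] unfolding s_def r_def by auto
  let ?ai = "ia a s" and ?bi = "ia b r"
  have gi: "good ?ai ?bi (inv s) (inv r)" by (rule good_inv[OF g])
  have gi1: "good (\<lambda>_. 1) (\<lambda>_. 1) (inv s) (inv r)" using good_inv[OF g1] by simp
  have UV: "tau ?ai ?bi (inv s) (inv r) (tau a b s r U) = U" by (rule tau_inv1[OF g])
  have uV: "unitary (tau a b s r U)" by (rule unitary_tau[OF g assms(1)])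
  have nV: "no_zero_entries (tau a b s r U)" by (rule nz_tau[OF g assms(2)])
  have inv1: "tau (\<lambda>_. 1) (\<lambda>_. 1) s r (tau (\<lambda>_. 1) (\<lambda>_. 1) (inv s) (inv r) G) = G" for G
    using tau_inv2[OF g1, of G] by simp
  have F: "feasible (tau a b s r U) = tau a b s r ` feasible U"
  proof (rule img_eq[where g = "tau ?ai ?bi (inv s) (inv r)"])
    show "\<forall>x\<in>feasible U. tau a b s r x \<in> feasible (tau a b s r U)" using feasible_tau[OF g] by blast
    show "\<forall>y\<in>feasible (tau a b s r U). tau ?ai ?bi (inv s) (inv r) y \<in> feasible U"
      using feasible_tau[OF gi, of _ "tau a b s r U"] UV by metis
    show "\<forall>y\<in>feasible (tau a b s r U). tau a b s r (tau ?ai ?bi (inv s) (inv r) y) = y"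
      using tau_inv2[OF g] by blast
  qed
  have E: "eigsp (tau a b s r U) 1 = tau (\<lambda>_. 1) (\<lambda>_. 1) s r ` eigsp U 1"
  proof (rule img_eq[where g = "tau (\<lambda>_. 1) (\<lambda>_. 1) (inv s) (inv r)"])
    show "\<forall>x\<in>eigsp U 1. tau (\<lambda>_. 1) (\<lambda>_. 1) s r x \<in> eigsp (tau a b s r U) 1"
      using eigsp_tau[OF g assms(1,2)] by blast
    show "\<forall>y\<in>eigsp (tau a b s r U) 1. tau (\<lambda>_. 1) (\<lambda>_. 1) (inv s) (inv r) y \<in> eigsp U 1"
      using eigsp_tau[OF gi uV nV] UV by metis
    show "\<forall>y\<in>eigsp (tau a b s r U) 1. tau (\<lambda>_. 1) (\<lambda>_. 1) s r (tau (\<lambda>_. 1) (\<lambda>_. 1) (inv s) (inv r) y) = y"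
      using inv1 by blast
  qed
  have I: "Im_eigsp (tau a b s r U) 1 = tau (\<lambda>_. 1) (\<lambda>_. 1) s r ` Im_eigsp U 1"
  proof (rule img_eq[where g = "tau (\<lambda>_. 1) (\<lambda>_. 1) (inv s) (inv r)"])
    show "\<forall>x\<in>Im_eigsp U 1. tau (\<lambda>_. 1) (\<lambda>_. 1) s r x \<in> Im_eigsp (tau a b s r U) 1"
      using Im_eigsp_tau[OF g assms(1,2)] by blast
    show "\<forall>y\<in>Im_eigsp (tau a b s r U) 1. tau (\<lambda>_. 1) (\<lambda>_. 1) (inv s) (inv r) y \<in> Im_eigsp U 1"
      using Im_eigsp_tau[OF gi uV nV] UV by metis
    show "\<forall>y\<in>Im_eigsp (tau a b s r U) 1. tau (\<lambda>_. 1) (\<lambda>_. 1) s r (tau (\<lambda>_. 1) (\<lambda>_. 1) (inv s) (inv r) y) = y"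
      using inv1 by blast
  qed
  have D: "defect (tau a b s r U) = defect U"
    unfolding defect_def F
    by (rule dim_image_eq[OF linear_tau]) (meson tau_inj[OF g] inj_on_subset subset_UNIV)
  show ?thesis unfolding V PhiST PhiP using D E I F by simp
qed

end
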